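(* For all $n,m\in\mathbb{N}$, \[ \sum_{j=0}^{n}\sum_{i=0}^{j}\frac{\binom{2n+2-m}{i}}{\binom{2n+1}{j}}=\frac{n+1}{2^{m+1}}\left(2H_{2n+1}-H_n-\sum_{k=1}^{m}\frac{2^{k+1}}{k}\left(\frac{\binom{2n+2-k}{n+1}}{\binom{2n+2}{n+1}}-1\right)\right). \]
   Context: For $x\in\mathbb{C}$ (in particular any integer $x$, possibly negative) and $i\in\mathbb{N}$: $\binom{x}{i}=x(x-1)\cdots(x-i+1)/i!$. $H_n=\sum_{k=1}^{n}\frac1k$ is the $n$-th harmonic number ($H_0=0$). Empty sums are $0$. *)

theory Defs
  imports "HOL-Analysis.Analysis"
begin

end

theory Submission
  imports Defs
begin

lemma swap_tri: "(\<Sum>j=0..(n::nat). \<Sum>i=0..j. f i j) = (\<Sum>i=0..n. \<Sum>j=i..n. (f i j::real))"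
proof (induction n)
  case 0 then show ?case by simp
next
  case (Suc n)
  have "(\<Sum>i=0..Suc n. \<Sum>j=i..Suc n. f i j) = (\<Sum>i=0..n. \<Sum>j=i..Suc n. f i j) + f (Suc n) (Suc n)"
    by simp
  also have "(\<Sum>i=0..n. \<Sum>j=i..Suc n. f i j) = (\<Sum>i=0..n. (\<Sum>j=i..n. f i j) + f i (Suc n))"
    by (intro sum.cong) auto
  finally show ?case using Suc by (simp add: sum.distrib)
qed

definition Bc :: "nat \<Rightarrow> nat \<Rightarrow> nat \<Rightarrow> real" where
  "Bc N J i = (\<Sum>j=i..J. 1 / real (N choose j))"

definition Sx :: "nat \<Rightarrow> real \<Rightarrow> real" where
  "Sx n x = (\<Sum>j=0..n. \<Sum>i=0..j. (x gchoose i) / real ((2*n+1) choose j))"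

lemma newton: "Sx n x = (\<Sum>i=0..n. (x gchoose i) * Bc (2*n+1) n i)"
  unfolding Sx_def Bc_def swap_tri by (simp add: sum_distrib_left)

lemma dh: "(a::real) * X = B \<Longrightarrow> a \<noteq> 0 \<Longrightarrow> X = B / a"
  by (simp add: field_simps)

lemma inv4: "1/(X*(Y*c/Z)/W) = ((Z::real)*W)/(X*Y*c)"
  by (simp add: field_simps)
lemma inv4': "2/(X*(Y*c/Z)/W) = 2*((Z::real)*W)/(X*Y*c)"
  by (simp add: field_simps)

lemma recip:
  assumes "j \<le> N"
  shows "1 / real (N choose j) = (real N+1)/(real N+3) * (1/real (Suc (Suc N) choose j)
     + 2/real (Suc (Suc N) choose Suc j) + 1/real (Suc (Suc N) choose Suc (Suc j)))"
proof -
  obtain d where N: "N = j + d" using assms le_iff_add by blast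
  have c: "real (N choose j) > 0" using assms by simp
  have e1: "real (Suc j) * real (Suc (Suc N) choose Suc j) = real (Suc (Suc N)) * real (Suc N choose j)"
    unfolding of_nat_mult[symmetric] by (rule arg_cong[where f=real], rule Suc_times_binomial)
  have e2: "real (Suc (Suc j)) * real (Suc (Suc N) choose Suc (Suc j)) = real (Suc (Suc N)) * real (Suc N choose Suc j)"
    unfolding of_nat_mult[symmetric] by (rule arg_cong[where f=real], rule Suc_times_binomial)
  have e3: "real (Suc j) * real (Suc N choose Suc j) = real (Suc N) * real (N choose j)"
    unfolding of_nat_mult[symmetric] by (rule arg_cong[where f=real], rule Suc_times_binomial)
  have e4: "real (Suc (Suc N) - j) * real (Suc (Suc N) choose j) = real (Suc (Suc N)) * real (Suc N choose j)"
    unfolding of_nat_mult[symmetric] by (rule arg_cong[where f=real], subst binomial_absorb_comp, simp)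
  have e5: "real (Suc N - j) * real (Suc N choose j) = real (Suc N) * real (N choose j)"
    unfolding of_nat_mult[symmetric] by (rule arg_cong[where f=real], subst binomial_absorb_comp, simp)
  define c0 where "c0 = real (N choose j)"
  have s4: "Suc (Suc N) - j = d + 2" "Suc N - j = d+1" using N by auto
  have p1: "real (Suc N choose j) = real (Suc N) * c0 / real (d+1)"
    unfolding c0_def by (rule dh[OF e5[unfolded s4]]) simp
  have p2: "real (Suc N choose Suc j) = real (Suc N) * c0 / real (Suc j)"
    unfolding c0_def by (rule dh[OF e3]) simp
  have q0: "real (Suc (Suc N) choose j) = real (Suc (Suc N)) * (real (Suc N) * c0 / real (d+1)) / real (d+2)"
  proof -
    have "real (Suc (Suc N) choose j) = real (d+2) * real (Suc (Suc N) choose j) / real (d+2)"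
      by (simp del: binomial_Suc_Suc of_nat_add)
    also have "\<dots> = real (Suc (Suc N)) * real (Suc N choose j) / real (d+2)"
      using e4 unfolding s4 by simp
    finally show ?thesis unfolding p1 .
  qed
  have q1: "real (Suc (Suc N) choose Suc j) = real (Suc (Suc N)) * (real (Suc N) * c0 / real (d+1)) / real (Suc j)"
    by (rule dh[OF e1, unfolded p1]) simp
  have q2: "real (Suc (Suc N) choose Suc (Suc j)) = real (Suc (Suc N)) * (real (Suc N) * c0 / real (Suc j)) / real (Suc (Suc j))"
    by (rule dh[OF e2, unfolded p2]) simp
  have "c0 > 0" using c c0_def by simp
  then have "1 / c0 = (real N+1)/(real N+3) * (1 / (real (Suc (Suc N)) * (real (Suc N) * c0 / real (d+1)) / real (d+2))
     + 2 / (real (Suc (Suc N)) * (real (Suc N) * c0 / real (d+1)) / real (Suc j))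
     + 1 / (real (Suc (Suc N)) * (real (Suc N) * c0 / real (Suc j)) / real (Suc (Suc j))))"
  proof -
    have k: "real N + 3 > 0" "real (Suc (Suc N)) > 0" "real (Suc N) > 0" by auto
    have br: "real (d+1) * real (d+2) + 2 * (real (d+1) * real (Suc j)) + real (Suc j) * real (Suc (Suc j))
       = real (Suc (Suc N)) * (real N + 3)" unfolding N by (simp add: algebra_simps)
    have t: "1 / (real (Suc (Suc N)) * (real (Suc N) * c0 / real (d+1)) / real (d+2))
     + 2 / (real (Suc (Suc N)) * (real (Suc N) * c0 / real (d+1)) / real (Suc j))
     + 1 / (real (Suc (Suc N)) * (real (Suc N) * c0 / real (Suc j)) / real (Suc (Suc j)))
     = (real (d+1) * real (d+2) + 2 * (real (d+1) * real (Suc j)) + real (Suc j) * real (Suc (Suc j)))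
       / (real (Suc (Suc N)) * real (Suc N) * c0)"
      by (simp only: inv4 inv4' add_divide_distrib)
    have u: "real (Suc (Suc N)) * (real N + 3) / (real (Suc (Suc N)) * real (Suc N) * c0)
        = (real N + 3) / (real (Suc N) * c0)"
      using k by (simp add: mult.assoc)
    have pos: "c0 * 3 + (c0 * (real N * real N) + c0 * (real N * 4)) > 0"
      using \<open>c0 > 0\<close> by (intro add_pos_nonneg) auto
    show ?thesis unfolding t br u using k \<open>c0 > 0\<close> pos by (simp add: field_simps)
  qed
  then show ?thesis unfolding q0 q1 q2 c0_def .
qed

lemma Bc_cons: "i \<le> J \<Longrightarrow> Bc N J i = 1/real(N choose i) + Bc N J (Suc i)"
  by (simp add: Bc_def sum.atLeast_Suc_atMost)
lemma Bc_empty: "J < i \<Longrightarrow> Bc N J i = 0"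
  by (simp add: Bc_def)

lemma lin4: "Bi = a + B1 \<Longrightarrow> B1 = 1/x + B2 \<Longrightarrow> B2 = c + B3 \<Longrightarrow>
   (K::real)*(a+2/x+c) + K*(B1+2*B2+B3) = K*(Bi + 2*B1 + B2)"
  by (simp add: algebra_simps)

lemma Bc_step:
  assumes "i \<le> n"
  shows "Bc (2*n+1) n i = (real(2*n+1)+1)/(real(2*n+1)+3) *
     (Bc (2*n+3) (n+1) i + 2*Bc (2*n+3) (n+1) (Suc i) + Bc (2*n+3) (n+1) (Suc (Suc i)))"
  using assms
proof (induction "n - i" arbitrary: i)
  case 0
  then have i: "i = n" by simp
  have M: "Suc (Suc (2*n+1)) = 2*n+3" by simp
  have sym: "(2*n+3) choose (Suc (Suc n)) = (2*n+3) choose (Suc n)"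
    using binomial_symmetric[of "Suc n" "2*n+3"] by (simp add: numeral_eq_Suc)
  have r: "1 / real ((2*n+1) choose n) = (real(2*n+1)+1)/(real(2*n+1)+3) * (1/real ((2*n+3) choose n)
     + 2/real ((2*n+3) choose Suc n) + 1/real ((2*n+3) choose Suc (Suc n)))"
    using recip[of n "2*n+1"] unfolding M by simp
  show ?case unfolding i
    apply (subst Bc_cons, simp, subst Bc_empty, simp)
    apply (subst Bc_cons, simp, subst Bc_cons, simp, subst Bc_empty, simp)
    apply (subst Bc_cons, simp, subst Bc_empty, simp)
    apply (subst Bc_empty, simp)
    using r unfolding sym by simp
next
  case (Suc d)
  then have i: "i < n" "d = n - Suc i" by auto
  have IH: "Bc (2*n+1) n (Suc i) = (real(2*n+1)+1)/(real(2*n+1)+3) *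
     (Bc (2*n+3) (n+1) (Suc i) + 2*Bc (2*n+3) (n+1) (Suc (Suc i)) + Bc (2*n+3) (n+1) (Suc (Suc (Suc i))))"
    using Suc i by auto
  have M: "Suc (Suc (2*n+1)) = 2*n+3" by simp
  have r: "1 / real ((2*n+1) choose i) = (real(2*n+1)+1)/(real(2*n+1)+3) * (1/real ((2*n+3) choose i)
     + 2/real ((2*n+3) choose Suc i) + 1/real ((2*n+3) choose Suc (Suc i)))"
    using recip[of i "2*n+1"] i unfolding M by simp
  have e: "Bc (2*n+1) n i = 1/real((2*n+1) choose i) + Bc (2*n+1) n (Suc i)"
    "Bc (2*n+3) (n+1) i = 1/real((2*n+3) choose i) + Bc (2*n+3) (n+1) (Suc i)"
    "Bc (2*n+3) (n+1) (Suc i) = 1/real((2*n+3) choose Suc i) + Bc (2*n+3) (n+1) (Suc (Suc i))"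
    "Bc (2*n+3) (n+1) (Suc (Suc i)) = 1/real((2*n+3) choose Suc (Suc i)) + Bc (2*n+3) (n+1) (Suc (Suc (Suc i)))"
    using i by (auto intro!: Bc_cons)
  show ?case unfolding e(1) IH r by (rule lin4[OF e(2) e(3) e(4)])
qed

lemma gb2: "((x::real)+2) gchoose (Suc (Suc k)) = (x gchoose k) + 2*(x gchoose Suc k) + (x gchoose Suc (Suc k))"
proof -
  have "(x+2) gchoose (Suc (Suc k)) = ((x+1)+1) gchoose (Suc (Suc k))" by (simp add: add.assoc)
  also have "\<dots> = ((x+1) gchoose Suc k) + ((x+1) gchoose Suc (Suc k))" by (rule gbinomial_Suc_Suc)
  also have "\<dots> = (x gchoose k) + 2*(x gchoose Suc k) + (x gchoose Suc (Suc k))"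
    by (simp only: gbinomial_Suc_Suc)
  finally show ?thesis .
qed

lemma shiftL: "(\<Sum>k=0..n+2. (((x::real)+2) gchoose k) * b k) =
   (\<Sum>i=0..n. (x gchoose i)*(b i + 2*b (Suc i) + b (Suc (Suc i))))
   + (x gchoose (n+1))*b (n+1) + ((x gchoose (n+2)) + 2*(x gchoose (n+1)))*b (n+2)"
proof (induction n)
  case 0
  have "(x+2) gchoose 2 = 1 + 2*x + (x gchoose 2)"
    using gb2[of x 0] by (simp add: numeral_2_eq_2)
  then show ?case by (simp add: numeral_2_eq_2 algebra_simps)
next
  case (Suc n)
  have "(\<Sum>k=0..Suc n+2. ((x+2) gchoose k) * b k) = (\<Sum>k=0..n+2. ((x+2) gchoose k) * b k)
     + ((x+2) gchoose (Suc (Suc (Suc n)))) * b (Suc (Suc (Suc n)))"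
    by simp
  also have "((x+2) gchoose (Suc (Suc (Suc n)))) = (x gchoose Suc n) + 2*(x gchoose Suc (Suc n)) + (x gchoose Suc (Suc (Suc n)))"
    by (rule gb2)
  finally show ?case unfolding Suc by (simp add: algebra_simps)
qed

lemma Sx_step: "Sx (n+1) (x+2) = Sx n x * ((real(2*n+1)+3)/(real(2*n+1)+1))
    + (x gchoose (n+1)) / real ((2*n+3) choose (n+1))"
proof -
  define b where "b = Bc (2*n+3) (n+1)"
  have "Sx (n+1) (x+2) = (\<Sum>i=0..n+1. ((x+2) gchoose i) * b i)"
  proof -
    have e: "2*(n+1)+1 = 2*n+3" by simp
    show ?thesis unfolding newton b_def e ..
  qed
  also have "\<dots> = (\<Sum>i=0..n+2. ((x+2) gchoose i) * b i)"
    by (simp add: b_def Bc_empty)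
  also have "\<dots> = (\<Sum>i=0..n. (x gchoose i)*(b i + 2*b (Suc i) + b (Suc (Suc i))))
     + (x gchoose (n+1)) / real ((2*n+3) choose (n+1))"
    unfolding shiftL by (simp add: b_def Bc_empty Bc_def)
  also have "(\<Sum>i=0..n. (x gchoose i)*(b i + 2*b (Suc i) + b (Suc (Suc i))))
     = (\<Sum>i=0..n. (x gchoose i) * Bc (2*n+1) n i) * ((real(2*n+1)+3)/(real(2*n+1)+1))"
    unfolding sum_distrib_right
  proof (rule sum.cong)
    fix i assume "i \<in> {0..n}"
    then have "i \<le> n" by simp
    from Bc_step[OF this] show "(x gchoose i)*(b i + 2*b (Suc i) + b (Suc (Suc i)))
       = (x gchoose i) * Bc (2*n+1) n i * ((real(2*n+1)+3)/(real(2*n+1)+1))"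
      unfolding b_def by (simp add: field_simps)
  qed simp
  finally show ?thesis unfolding newton .
qed

lemma algG: assumes "(t::real) \<ge> 0" shows
  "(t+1)/2*(2*H1 - H0)*(((2*t+1)+3)/((2*t+1)+1)) + (t+2)/(2*t+3) =
   ((t+1)+1)/2*(2*(H1 + 1/(2*t+2) + 1/(2*t+3)) - (H0 + 1/(t+1)))"
proof -
  have "2*t+3 \<noteq> 0" "t+1 \<noteq> 0" "2*t+2 \<noteq> 0" using assms by auto
  have q: "((2*t+1)+3)/((2*t+1)+1) = (t+2)/(t+1)" using assms by (simp add: field_simps)
  have q2: "(t+1)/2*(2*H1 - H0)*((t+2)/(t+1)) = (t+2)/2*(2*H1 - H0)" using assms by (simp add: field_simps)
  have q3: "2*(1/(2*t+2)) = 1/(t+1)" using assms by (simp add: field_simps)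
  have "((t+1)+1)/2*(2*(H1 + 1/(2*t+2) + 1/(2*t+3)) - (H0 + 1/(t+1)))
     = (t+2)/2*(2*H1 - H0) + (t+2)/2 * (2*(1/(2*t+2)) - 1/(t+1)) + (t+2)/2*(2*(1/(2*t+3)))"
  proof -
    have gen: "\<And>a b c. ((t+1)+1)/2*(2*(H1 + a + b) - (H0 + c)) = (t+2)/2*(2*H1 - H0) + (t+2)/2*(2*a - c) + (t+2)/2*(2*b)"
      by (simp add: field_simps)
    show ?thesis by (rule gen)
  qed
  also have "\<dots> = (t+2)/2*(2*H1 - H0) + (t+2)/(2*t+3)"
  proof -
    have nz: "4*t+6 \<noteq> 0" "2*t+3 \<noteq> 0" using assms by auto
    have "(t*2+4)/(4*t+6) = (t+2)/(2*t+3)" using nz by (simp add: field_simps)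
    then show ?thesis unfolding q3 by simp
  qed
  finally show ?thesis unfolding q q2 by simp
qed

lemma G: "Sx n (real (2*n+2)) = real(n+1)/2 * (2*harm(2*n+1) - harm n)"
proof (induction n)
  case 0
  show ?case by (simp add: Sx_def harm_def)
next
  case (Suc n)
  have a: "real (2*Suc n+2) = real (2*n+2) + 2" by simp
  have c: "real (2*n+2) gchoose (n+1) = real ((2*n+2) choose (n+1))"
    by (simp only: binomial_gbinomial)
  have d: "real (n+2) * real ((2*n+3) choose (n+1)) = real (2*n+3) * real ((2*n+2) choose (n+1))"
    using binomial_absorb_comp[of "2*n+3" "n+1"] unfolding of_nat_mult[symmetric]
    by (simp del: binomial_Suc_Suc add: numeral_eq_Suc)
  have pos: "real ((2*n+3) choose (n+1)) > 0" by simp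
  have r: "real ((2*n+2) choose (n+1)) / real ((2*n+3) choose (n+1)) = real (n+2) / real (2*n+3)"
    using d pos by (simp add: field_simps del: binomial_Suc_Suc)
  have h1: "harm (2*Suc n+1) = harm (2*n+1) + 1/real(2*n+2) + 1/real(2*n+3)"
  proof -
    have "2*Suc n+1 = Suc (Suc (2*n+1))" by simp
    then show ?thesis by (simp add: harm_Suc field_simps)
  qed
  have h2: "harm (Suc n) = harm n + 1/real(n+1)" by (simp add: harm_Suc field_simps)
  have "Sx (Suc n) (real (2*Suc n+2)) = Sx (n+1) (real (2*n+2) + 2)" by (simp add: algebra_simps)
  also have "\<dots> = Sx n (real (2*n+2)) * ((real(2*n+1)+3)/(real(2*n+1)+1))
    + (real (2*n+2) gchoose (n+1)) / real ((2*n+3) choose (n+1))" by (rule Sx_step)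
  also have "\<dots> = real(n+1)/2 * (2*harm(2*n+1) - harm n) * ((real(2*n+1)+3)/(real(2*n+1)+1))
    + real (n+2) / real (2*n+3)" unfolding Suc.IH c r ..
  also have "\<dots> = real(n+1+1)/2 * (2*harm(2*Suc n+1) - harm (Suc n))"
    unfolding h1 h2 of_nat_add of_nat_mult of_nat_numeral of_nat_1 by (rule algG) simp
  finally show ?case by simp
qed

lemma inner: "(\<Sum>i=0..j. (((x::real)+1) gchoose i)) = 2*(\<Sum>i=0..j. x gchoose i) - (x gchoose j)"
proof (induction j)
  case 0 then show ?case by simp
next
  case (Suc j)
  have a: "(x+1) gchoose Suc j = (x gchoose j) + (x gchoose Suc j)" by (rule gbinomial_Suc_Suc)
  have "(\<Sum>i=0..Suc j. ((x+1) gchoose i)) = (\<Sum>i=0..j. ((x+1) gchoose i)) + ((x+1) gchoose Suc j)"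
    by (rule sum.atLeast0_atMost_Suc)
  also have "\<dots> = 2*(\<Sum>i=0..j. x gchoose i) - (x gchoose j) + ((x gchoose j) + (x gchoose Suc j))"
    unfolding Suc.IH a ..
  also have "\<dots> = 2*(\<Sum>i=0..Suc j. x gchoose i) - (x gchoose Suc j)"
    unfolding sum.atLeast0_atMost_Suc by simp
  finally show ?case .
qed

lemma Sx_shift: "Sx n (x+1) = 2 * Sx n x - (\<Sum>j=0..n. (x gchoose j)/real((2*n+1) choose j))"
proof -
  have "Sx n (x+1) = (\<Sum>j=0..n. (\<Sum>i=0..j. ((x+1) gchoose i)) / real ((2*n+1) choose j))"
    unfolding Sx_def by (simp add: sum_divide_distrib)
  also have "\<dots> = (\<Sum>j=0..n. 2*((\<Sum>i=0..j. (x gchoose i)) / real ((2*n+1) choose j)) - (x gchoose j)/real((2*n+1) choose j))"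
    unfolding inner by (simp add: diff_divide_distrib)
  also have "\<dots> = 2 * Sx n x - (\<Sum>j=0..n. (x gchoose j)/real((2*n+1) choose j))"
    unfolding Sx_def sum_subtractf by (simp add: sum_divide_distrib sum_distrib_left)
  finally show ?thesis .
qed

lemma tele_step:
  assumes "Suc K \<le> N'+1"
  shows "(real (N'+1) - x) * ((x gchoose K)/real(N' choose K)) =
     real (N'+1) * ((x gchoose K)/real((N'+1) choose K) - (x gchoose Suc K)/real((N'+1) choose Suc K))"
proof -
  have "K \<le> N'" using assms by simp
  then obtain d where N: "N' = K + d" using le_iff_add by blast
  define g where "g = x gchoose K"
  have G1: "x gchoose Suc K = (x - real K) * g / real (Suc K)"
    using gbinomial_mult_1[of x K] unfolding g_def by (simp add: field_simps)
  have e1: "real (Suc K) * real (Suc N' choose Suc K) = real (Suc N') * real (N' choose K)"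
    unfolding of_nat_mult[symmetric] by (rule arg_cong[where f=real], rule Suc_times_binomial)
  have e2: "real (Suc N' - K) * real (Suc N' choose K) = real (Suc N') * real (N' choose K)"
    unfolding of_nat_mult[symmetric] by (rule arg_cong[where f=real], subst binomial_absorb_comp, simp)
  define c where "c = real (N' choose K)"
  have cpos: "c > 0" unfolding c_def using N by simp
  have s: "Suc N' - K = d + 1" using N by simp
  have C1: "real (Suc N' choose Suc K) = real (Suc N') * c / real (Suc K)"
    unfolding c_def by (rule dh[OF e1]) simp
  have C0: "real (Suc N' choose K) = real (Suc N') * c / real (d+1)"
    unfolding c_def by (rule dh[OF e2[unfolded s]]) simp
  have S: "real (Suc N') \<noteq> 0" "real (Suc K) \<noteq> 0" by auto
  have f1: "g / (real (Suc N') * c / real (d+1)) = (g * real (d+1)) / (real (Suc N') * c)"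
    by simp
  have f2: "(x - real K) * g / real (Suc K) / (real (Suc N') * c / real (Suc K)) = ((x - real K) * g) / (real (Suc N') * c)"
    using S by simp
  have f3: "real (Suc N') * ((g * real (d+1)) / (real (Suc N') * c) - ((x - real K) * g) / (real (Suc N') * c))
     = (g * real (d+1) - (x - real K) * g) / c"
    using S by (simp add: diff_divide_distrib[symmetric])
  have f4: "g * real (d+1) - (x - real K) * g = g * (real (N'+1) - x)"
    using N by (simp add: algebra_simps)
  show ?thesis unfolding G1 C1 C0 g_def[symmetric] c_def[symmetric] Suc_eq_plus1[symmetric] f1 f2
    using f3 f4 by simp
qed


lemma tele:
  assumes "K \<le> N'+1"
  shows "(real (N'+1) - x) * (\<Sum>j<K. (x gchoose j)/real(N' choose j)) = real (N'+1) * (1 - (x gchoose K)/real((N'+1) choose K))"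
  using assms
proof (induction K)
  case 0 then show ?case by simp
next
  case (Suc K)
  then have IH: "(real (N'+1) - x) * (\<Sum>j<K. (x gchoose j)/real(N' choose j)) = real (N'+1) * (1 - (x gchoose K)/real((N'+1) choose K))"
    by simp
  show ?case unfolding sum.lessThan_Suc distrib_left IH tele_step[OF Suc.prems]
    by (simp add: algebra_simps)
qed

lemma Tform:
  assumes "x \<noteq> real (2*n+2)"
  shows "(\<Sum>j=0..n. (x gchoose j)/real((2*n+1) choose j)) =
     real (2*n+2) * (1 - (x gchoose (n+1))/real((2*n+2) choose (n+1))) / (real (2*n+2) - x)"
proof -
  have t: "(real (2*n+1+1) - x) * (\<Sum>j<n+1. (x gchoose j)/real((2*n+1) choose j)) = real (2*n+1+1) * (1 - (x gchoose (n+1))/real((2*n+1+1) choose (n+1)))"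
    by (rule tele) simp
  have e: "2*n+1+1 = 2*n+2" by simp
  have ne: "real (2*n+2) - x \<noteq> 0" using assms by simp
  have s: "{..<n+1} = {0..n}" by auto
  show ?thesis using t ne unfolding e s by (simp add: field_simps)
qed

lemma algM: assumes "(w::real) \<noteq> 0" "M \<noteq> 0"
  shows "(P/w*(A-S) + 2*P*(1-c)/M)/2 = P/(2*w)*(A - (S + 2*w/M*(c-1)))"
  using assms by (simp add: field_simps)

lemma mainS: "Sx n (of_int (2 * int n + 2 - int m))
       = real (n+1) / 2 ^ (m+1) *
           (2 * harm (2*n+1) - harm n
            - (\<Sum>k=1..m. 2 ^ (k+1) / real k *
                 (((of_int (2 * int n + 2 - int k) :: real) gchoose (n+1))
                    / real ((2*n+2) choose (n+1)) - 1)))"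
proof (induction m)
  case 0
  have e: "(of_int (2 * int n + 2 - int 0) :: real) = real (2*n+2)" by simp
  show ?case unfolding e G by simp
next
  case (Suc m)
  define y :: real where "y = of_int (2 * int n + 2 - int (Suc m))"
  have y1: "y + 1 = of_int (2 * int n + 2 - int m)" unfolding y_def by simp
  have yne: "y \<noteq> real (2*n+2)" unfolding y_def by simp
  have ym: "real (2*n+2) - y = real (Suc m)" unfolding y_def by simp
  define c where "c = (y gchoose (n+1)) / real ((2*n+2) choose (n+1))"
  define A :: real where "A = 2 * harm (2*n+1) - harm n"
  define S where "S = (\<Sum>k=1..m. 2 ^ (k+1) / real k *
                 (((of_int (2 * int n + 2 - int k) :: real) gchoose (n+1))
                    / real ((2*n+2) choose (n+1)) - 1))"
  have sh: "Sx n (y+1) = 2 * Sx n y - real (2*n+2) * (1 - c) / real (Suc m)"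
    unfolding Sx_shift Tform[OF yne] ym c_def ..
  have IH: "Sx n (y+1) = real (n+1) / 2 ^ (m+1) * (A - S)"
    unfolding y1 Suc.IH A_def S_def ..
  have "Sx n y = (real (n+1) / 2 ^ (m+1) * (A - S) + 2 * real (n+1) * (1-c) / real (Suc m)) / 2"
    using sh IH by simp
  also have "\<dots> = real (n+1) / (2 * 2^(m+1)) * (A - (S + 2 * 2^(m+1) / real (Suc m) * (c - 1)))"
    by (rule algM) simp_all
  finally have "Sx n y = real (n+1) / (2 * 2^(m+1)) * (A - (S + 2 * 2^(m+1) / real (Suc m) * (c - 1)))" .
  moreover have "(\<Sum>k=1..Suc m. 2 ^ (k+1) / real k *
                 (((of_int (2 * int n + 2 - int k) :: real) gchoose (n+1))
                    / real ((2*n+2) choose (n+1)) - 1)) = S + 2 * 2^(m+1) / real (Suc m) * (c - 1)"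
    unfolding S_def c_def y_def by simp
  ultimately show ?case unfolding A_def y_def by simp
qed

theorem mainTheorem8:
  fixes n m :: nat
  shows "(\<Sum>j=0..n. \<Sum>i=0..j.
            ((of_int (2 * int n + 2 - int m) :: real) gchoose i) / real ((2*n+1) choose j))
       = real (n+1) / 2 ^ (m+1) *
           (2 * harm (2*n+1) - harm n
            - (\<Sum>k=1..m. 2 ^ (k+1) / real k *
                 (((of_int (2 * int n + 2 - int k) :: real) gchoose (n+1))
                    / real ((2*n+2) choose (n+1)) - 1)))"
  using mainS[of n m] unfolding Sx_def .

end
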